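(* Let $f:[a,b]\to\mathbb F$ and $h:[a,b]\to\mathbb F$, $h(t)=f(t)\Delta g(t)$. Let \[D_1=\{t\in[a,b]\cap N_g^-: t\in (D_g\cap[a,t))'\},\quad D_2=\{t\in[a,b]\cap N_g^+: t\in (D_g\cap(t,b])'\},\] \[D_3=\{t\in[a,b]\setminus (N_g\cup D_g): t\in (D_g\cap[a,b])'\}.\] For $t\in[a,b]$: 1. If $t^*\in D_1\cup D_2\cup D_3$, then $h$ is $g$-differentiable at $t$ if and only if $\displaystyle\lim_{s\to t^*,\ s\in D_g}\frac{f(s)\Delta g(s)}{g(s)-g(t)}=0$, where the limit is the left-hand one if $t^*\in N_g^-$ and the right-hand one if $t^*\in N_g^+$. 2. If $t^*\in D_g\cap (D_g\cap(t,b])'$, then $h$ is $g$-differentiable at $t$ if and only if $\displaystyle\lim_{s\to t^{*+},\ s\in D_g}f(s)\Delta g(s)=0$. 3. In any other case, $h$ is $g$-differentiable at $t$. Moreover, if $h$ is $g$-differentiable at $t$, then $h'_g(t)=-f(t^* )\chi_{D_g}(t^* )$.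
   Context: Let $g:\mathbb R\to\mathbb R$ be nondecreasing and left-continuous, and $\mathbb F\in\{\mathbb R,\mathbb C\}$. $\Delta g(t)=g(t^+)-g(t)$, $D_g=\{t:\Delta g(t)>0\}$, $C_g=\{t: g\text{ constant on }(t-\varepsilon,t+\varepsilon)\text{ for some }\varepsilon>0\}=\bigcup_{n\in\Lambda}(a_n,b_n)$ (disjoint union of connected components), $N_g^-=\{a_n:n\in\Lambda\}\setminus D_g$, $N_g^+=\{b_n:n\in\Lambda\}\setminus D_g$, $N_g=N_g^-\cup N_g^+$. Fix $a<b$ with $a\notin N_g^-$, $b\notin D_g\cup C_g\cup N_g^+$. For $t\in[a,b]$, $t^*=t$ if $t\notin C_g$ and $t^*=b_n$ if $t\in(a_n,b_n)$. The $g$-derivative of $u:[a,b]\to\mathbb F$ at $t$ is $u'_g(t)=\lim_{s\to t}\frac{u(s)-u(t)}{g(s)-g(t)}$ if $t\notin D_g\cup C_g$ and $u'_g(t)=\lim_{s\to t^{*+}}\frac{u(s)-u(t^* )}{g(s)-g(t^* )}$ if $t\in D_g\cup C_g$, provided the finite limit exists ($u$ is then $g$-differentiable at $t$); limits are over $s\in[a,b]$ with nonzero denominator, and at points of $N_g^+\cup\{a\}$ only the right-hand limit, at points of $N_g^-\cup\{b\}$ only the left-hand limit is taken. $X'$ denotes the set of accumulation points of $X\subset\mathbb R$, and $\chi_{D_g}$ is the indicator function of $D_g$. *)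

theory Defs
  imports "HOL-Analysis.Analysis"
begin

text \<open>Stieltjes-type (g-)derivatives. Throughout, g is nondecreasing and left-continuous;
  the right limit g(t+) exists by monotonicity.\<close>

definition jump :: "(real \<Rightarrow> real) \<Rightarrow> real \<Rightarrow> real" where
  "jump g t = Lim (at_right t) g - g t"

definition Dg :: "(real \<Rightarrow> real) \<Rightarrow> real set" where
  "Dg g = {t. jump g t > 0}"

definition Cg :: "(real \<Rightarrow> real) \<Rightarrow> real set" where
  "Cg g = {t. \<exists>e>0. \<forall>s\<in>{t-e<..<t+e}. g s = g t}"

definition Nminus :: "(real \<Rightarrow> real) \<Rightarrow> real set" where
  "Nminus g = {Inf c | c. c \<in> components (Cg g) \<and> bdd_below c} - Dg g"

definition Nplus :: "(real \<Rightarrow> real) \<Rightarrow> real set" where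
  "Nplus g = {Sup c | c. c \<in> components (Cg g) \<and> bdd_above c} - Dg g"

definition Ng :: "(real \<Rightarrow> real) \<Rightarrow> real set" where
  "Ng g = Nminus g \<union> Nplus g"

definition tstar :: "(real \<Rightarrow> real) \<Rightarrow> real \<Rightarrow> real" where
  "tstar g t = (if t \<in> Cg g then Sup (connected_component_set (Cg g) t) else t)"

text \<open>The limit is
  required to be a genuine limit (the filter is nontrivial).\<close>
definition has_g_deriv ::
  "(real \<Rightarrow> real) \<Rightarrow> real \<Rightarrow> real \<Rightarrow> (real \<Rightarrow> 'a::real_normed_field) \<Rightarrow> real \<Rightarrow> 'a \<Rightarrow> bool" where
  "has_g_deriv g a b u t L =
    (if t \<in> Dg g \<union> Cg g then
       (let T = tstar g t;
            F = at T within ({a..b} \<inter> {s. g s \<noteq> g T} \<inter> {T<..})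
        in F \<noteq> bot \<and> ((\<lambda>s. (u s - u T) / of_real (g s - g T)) \<longlongrightarrow> L) F)
     else
       (let F = at t within ({a..b} \<inter> {s. g s \<noteq> g t}
                   \<inter> (if t \<in> Nplus g \<union> {a} then {t..} else UNIV)
                   \<inter> (if t \<in> Nminus g \<union> {b} then {..t} else UNIV))
        in F \<noteq> bot \<and> ((\<lambda>s. (u s - u t) / of_real (g s - g t)) \<longlongrightarrow> L) F))"

definition g_differentiable ::
  "(real \<Rightarrow> real) \<Rightarrow> real \<Rightarrow> real \<Rightarrow> (real \<Rightarrow> 'a::real_normed_field) \<Rightarrow> real \<Rightarrow> bool" where
  "g_differentiable g a b u t = (\<exists>L. has_g_deriv g a b u t L)"

definition g_deriv ::
  "(real \<Rightarrow> real) \<Rightarrow> real \<Rightarrow> real \<Rightarrow> (real \<Rightarrow> 'a::real_normed_field) \<Rightarrow> real \<Rightarrow> 'a" where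
  "g_deriv g a b u t = (THE L. has_g_deriv g a b u t L)"

end

theory Submission
  imports Defs
begin

definition lflat :: "(real \<Rightarrow> real) \<Rightarrow> real \<Rightarrow> bool" where
  "lflat g x = (\<exists>e>0. \<forall>s\<in>{x-e<..<x}. g s = g x)"
definition rflat :: "(real \<Rightarrow> real) \<Rightarrow> real \<Rightarrow> bool" where
  "rflat g x = (\<exists>e>0. \<forall>s\<in>{x<..<x+e}. g s = g x)"

lemma ev_nhds_iv: "0 < e \<Longrightarrow> \<forall>s\<in>{x-e<..<x+e}. P s \<Longrightarrow> eventually P (nhds (x::real))"
  unfolding eventually_nhds by (intro exI[of _ "{x-e<..<x+e}"]) auto

lemma ev_right_iv: "x < b \<Longrightarrow> \<forall>s\<in>{x<..<b}. P s \<Longrightarrow> eventually P (at_right (x::real))"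
  unfolding eventually_at_right_field by (intro exI[of _ b]) auto

lemma ev_left_iv: "b < x \<Longrightarrow> \<forall>s\<in>{b<..<x}. P s \<Longrightarrow> eventually P (at_left (x::real))"
  unfolding eventually_at_left_field by (intro exI[of _ b]) auto

lemma ball_sub: "\<forall>s\<in>A. P s \<Longrightarrow> B \<subseteq> A \<Longrightarrow> \<forall>s\<in>B. P s" by blast

locale gctx =
  fixes g :: "real \<Rightarrow> real"
  assumes mono_g: "mono g"
    and left_cont: "\<And>x. continuous (at_left x) g"
begin

lemma monoD': "x \<le> y \<Longrightarrow> g x \<le> g y"
  using mono_g by (simp add: mono_def)

lemma bdd_right: "bdd_below (g ` {x<..})"
  by (rule bdd_belowI[of _ "g x"]) (auto intro: monoD')

lemma right_lim: "(g \<longlongrightarrow> Inf (g ` {x<..})) (at_right x)"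
proof (rule order_tendstoI)
  fix y assume "y < Inf (g ` {x<..})"
  then have "\<forall>s>x. y < g s" using cInf_lower[OF _ bdd_right, of _ x] by force
  then show "eventually (\<lambda>s. y < g s) (at_right x)"
    by (auto simp add: eventually_at_right_field intro: gt_ex)
next
  fix y assume "Inf (g ` {x<..}) < y"
  then obtain s where s: "s > x" "g s < y"
    using cInf_lessD[of "g ` {x<..}" y] by auto
  show "eventually (\<lambda>u. g u < y) (at_right x)"
    unfolding eventually_at_right_field
    using s by (intro exI[of _ s]) (auto intro: le_less_trans[OF monoD'] less_imp_le)
qed

lemma jump_eq: "jump g x = Inf (g ` {x<..}) - g x"
  unfolding jump_def using tendsto_Lim[OF trivial_limit_at_right_real right_lim] by simp

lemma jump_tendsto: "(g \<longlongrightarrow> g x + jump g x) (at_right x)"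
  using right_lim by (simp add: jump_eq)

lemma jump_le: "s > x \<Longrightarrow> g x + jump g x \<le> g s"
  by (simp add: jump_eq cInf_lower[OF _ bdd_right])

lemma jump_nonneg: "jump g x \<ge> 0"
proof -
  have "g x \<le> Inf (g ` {x<..})"
    by (rule cInf_greatest) (auto intro: monoD' gt_ex)
  then show ?thesis by (simp add: jump_eq)
qed

lemma notDg_jump: "x \<notin> Dg g \<Longrightarrow> jump g x = 0"
  using jump_nonneg[of x] by (simp add: Dg_def)

lemma Dg_sub: "Dg g \<subseteq> {x. \<not> isCont g x}"
proof
  fix x assume x: "x \<in> Dg g"
  show "x \<in> {x. \<not> isCont g x}"
  proof
    show "\<not> isCont g x"
    proof
      assume "isCont g x"
      then have "(g \<longlongrightarrow> g x) (at_right x)"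
        by (simp add: isCont_def filterlim_at_split)
      then have "g x + jump g x = g x"
        using tendsto_unique[OF trivial_limit_at_right_real jump_tendsto] by blast
      then show False using x by (simp add: Dg_def)
    qed
  qed
qed

lemma Dg_countable: "countable (Dg g)"
  using countable_subset[OF Dg_sub mono_ctble_discont[OF mono_g]] .

lemma nonDg: "x < y \<Longrightarrow> \<exists>z\<in>{x<..<y}. z \<notin> Dg g"
proof (rule ccontr)
  assume "x < y" "\<not> (\<exists>z\<in>{x<..<y}. z \<notin> Dg g)"
  then have "{x<..<y} \<subseteq> Dg g" by auto
  then have "countable {x<..<y}" using countable_subset Dg_countable by blast
  then show False using uncountable_open_interval \<open>x<y\<close> by blast
qed

lemma limpt_right:
  assumes "x < y" "{x<..<y} \<subseteq> X" shows "x islimpt (X - Dg g)"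
  unfolding islimpt_approachable
proof (intro allI impI)
  fix e :: real assume "e > 0"
  then obtain z where "z \<in> {x<..<min y (x+e)}" "z \<notin> Dg g" using nonDg[of x "min y (x+e)"] assms by auto
  then show "\<exists>x'\<in>X - Dg g. x' \<noteq> x \<and> dist x' x < e" using assms
    by (intro bexI[of _ z]) (auto simp: dist_real_def)
qed

lemma limpt_left:
  assumes "y < x" "{y<..<x} \<subseteq> X" shows "x islimpt (X - Dg g)"
  unfolding islimpt_approachable
proof (intro allI impI)
  fix e :: real assume "e > 0"
  then obtain z where "z \<in> {max y (x-e)<..<x}" "z \<notin> Dg g" using nonDg[of "max y (x-e)" x] assms by auto
  then show "\<exists>x'\<in>X - Dg g. x' \<noteq> x \<and> dist x' x < e" using assms
    by (intro bexI[of _ z]) (auto simp: dist_real_def)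
qed

lemma lcont: "(g \<longlongrightarrow> g x) (at_left x)"
  using left_cont[of x] by (simp add: continuous_within)

lemma Cg_iff: "x \<in> Cg g \<longleftrightarrow> lflat g x \<and> rflat g x"
proof
  assume "x \<in> Cg g"
  then obtain e where e: "e > 0" "\<forall>s\<in>{x-e<..<x+e}. g s = g x" unfolding Cg_def by blast
  have "\<forall>s\<in>{x-e<..<x}. g s = g x"
  proof
    fix s assume "s \<in> {x-e<..<x}"
    then have "s \<in> {x-e<..<x+e}" using e(1) by simp
    then show "g s = g x" using e(2) by blast
  qed
  moreover have "\<forall>s\<in>{x<..<x+e}. g s = g x"
  proof
    fix s assume "s \<in> {x<..<x+e}"
    then have "s \<in> {x-e<..<x+e}" using e(1) by simp
    then show "g s = g x" using e(2) by blast
  qed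
  ultimately show "lflat g x \<and> rflat g x" unfolding lflat_def rflat_def using e(1) by blast
next
  assume "lflat g x \<and> rflat g x"
  then obtain e1 e2 where e: "e1 > 0" "\<forall>s\<in>{x-e1<..<x}. g s = g x" "e2 > 0" "\<forall>s\<in>{x<..<x+e2}. g s = g x"
    unfolding lflat_def rflat_def by blast
  have "\<forall>s\<in>{x - min e1 e2<..<x + min e1 e2}. g s = g x"
  proof
    fix s assume s: "s \<in> {x - min e1 e2<..<x + min e1 e2}"
    show "g s = g x"
    proof (cases s x rule: linorder_cases)
      case less then have "s \<in> {x-e1<..<x}" using s min.cobounded1[of e1 e2] unfolding greaterThanLessThan_iff by linarith
      then show ?thesis using e(2) by blast
    next
      case greater then have "s \<in> {x<..<x+e2}" using s min.cobounded2[of e1 e2] unfolding greaterThanLessThan_iff by linarith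
      then show ?thesis using e(4) by blast
    qed simp
  qed
  moreover have "min e1 e2 > 0" using e by simp
  ultimately show "x \<in> Cg g" unfolding Cg_def by blast
qed

lemma Cg_ball: assumes e: "\<forall>s\<in>{x-e<..<x+e}. g s = g x" and s: "s \<in> {x-e<..<x+e}" shows "s \<in> Cg g"
proof -
  have d0: "0 < s-(x-e)" "0 < x+e-s" using s unfolding greaterThanLessThan_iff by linarith+
  obtain d where d: "d > 0" and d1: "d < s-(x-e)" "d < x+e-s" using field_lbound_gt_zero[OF d0] by blast
  have "{s-d<..<s+d} \<subseteq> {x-e<..<x+e}"
  proof
    fix u assume "u \<in> {s-d<..<s+d}"
    then show "u \<in> {x-e<..<x+e}" using d1 unfolding greaterThanLessThan_iff by linarith
  qed
  then have sub: "{s-d<..<s+d} \<subseteq> {x-e<..<x+e}" .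
  have gs: "g s = g x" using e s by blast
  have "\<forall>u\<in>{s-d<..<s+d}. g u = g s"
  proof
    fix u assume "u \<in> {s-d<..<s+d}"
    then have "u \<in> {x-e<..<x+e}" using sub by blast
    then have "g u = g x" using e by blast
    then show "g u = g s" using gs by simp
  qed
  then show ?thesis unfolding Cg_def using d by blast
qed

lemma Cg_open: "open (Cg g)"
  unfolding open_subopen[of "Cg g"]
proof
  fix x assume "x \<in> Cg g"
  then obtain e where e: "e > 0" "\<forall>s\<in>{x-e<..<x+e}. g s = g x" unfolding Cg_def by blast
  have "{x-e<..<x+e} \<subseteq> Cg g" using Cg_ball[OF e(2)] by blast
  moreover have "x \<in> {x-e<..<x+e}" using e(1) by simp
  moreover have "open {x-e<..<x+e}" by simp
  ultimately show "\<exists>T. open T \<and> x \<in> T \<and> T \<subseteq> Cg g" by blast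
qed

lemma Cg_deriv: "x \<in> Cg g \<Longrightarrow> DERIV g x :> 0"
proof -
  assume "x \<in> Cg g"
  then obtain e where e: "e > 0" "\<forall>s\<in>{x-e<..<x+e}. g s = g x" unfolding Cg_def by blast
  have ev: "eventually (\<lambda>y. g y = g x) (nhds x)"
    using ev_nhds_iv[OF e] .
  have "DERIV (\<lambda>_. g x) x :> 0" by simp
  then show ?thesis using DERIV_cong_ev[OF refl ev refl] by simp
qed

lemma Cg_const: assumes "u \<le> v" "{u..v} \<subseteq> Cg g" shows "g u = g v"
proof (cases "u = v")
  case False
  then have "u < v" using assms by simp
  have "continuous_on {u..v} g"
  proof (intro continuous_at_imp_continuous_on ballI)
    fix x assume "x \<in> {u..v}"
    then have "x \<in> Cg g" using assms by auto
    then show "isCont g x" using Cg_deriv DERIV_isCont by blast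
  qed
  then show ?thesis using DERIV_isconst_end[OF \<open>u<v\<close>] Cg_deriv assms by (metis atLeastAtMost_iff less_imp_le subsetD)
qed simp

lemma Cg_Dg: "x \<in> Cg g \<Longrightarrow> x \<notin> Dg g"
proof -
  assume "x \<in> Cg g"
  then have "rflat g x" using Cg_iff by blast
  then obtain e where e: "e > 0" "\<forall>s\<in>{x<..<x+e}. g s = g x" unfolding rflat_def by blast
  have "x < x + e" using e(1) by simp
  have "eventually (\<lambda>s. g s = g x) (at_right x)"
    using ev_right_iv[OF \<open>x < x + e\<close> e(2)] .
  then have "(g \<longlongrightarrow> g x) (at_right x)" by (simp add: tendsto_eventually)
  then have "g x + jump g x = g x"
    using tendsto_unique[OF trivial_limit_at_right_real jump_tendsto] by blast
  then show "x \<notin> Dg g" by (simp add: Dg_def)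
qed

lemma not_rflat: "\<not> rflat g x \<Longrightarrow> s > x \<Longrightarrow> g s \<noteq> g x"
proof
  assume "\<not> rflat g x" "s > x" "g s = g x"
  have "\<forall>u\<in>{x<..<x+(s-x)}. g u = g x"
  proof
    fix u assume "u \<in> {x<..<x+(s-x)}"
    then have "g x \<le> g u" "g u \<le> g s" using monoD' by auto
    then show "g u = g x" using \<open>g s = g x\<close> by linarith
  qed
  then show False using \<open>\<not> rflat g x\<close> \<open>s > x\<close> unfolding rflat_def
    using diff_gt_0_iff_gt by blast
qed

lemma not_lflat: "\<not> lflat g x \<Longrightarrow> s < x \<Longrightarrow> g s \<noteq> g x"
proof
  assume "\<not> lflat g x" "s < x" "g s = g x"
  have "\<forall>u\<in>{x-(x-s)<..<x}. g u = g x"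
  proof
    fix u assume "u \<in> {x-(x-s)<..<x}"
    then have "g s \<le> g u" "g u \<le> g x" using monoD' by auto
    then show "g u = g x" using \<open>g s = g x\<close> by linarith
  qed
  then show False using \<open>\<not> lflat g x\<close> \<open>s < x\<close> unfolding lflat_def
    using diff_gt_0_iff_gt by blast
qed

lemma comp_basic:
  assumes "c \<in> components (Cg g)"
  shows "open c" "connected c" "c \<subseteq> Cg g" "\<And>y. y \<in> c \<Longrightarrow> connected_component_set (Cg g) y = c"
proof -
  obtain x where x: "x \<in> Cg g" "c = connected_component_set (Cg g) x" using assms components_iff by blast
  show "open c" using x open_connected_component[OF Cg_open] by simp
  show "connected c" using x by simp
  show "c \<subseteq> Cg g" using x connected_component_subset by simp
  show "\<And>y. y \<in> c \<Longrightarrow> connected_component_set (Cg g) y = c" using x connected_component_eq by simp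
qed

lemma comp_sup:
  assumes c: "c \<in> components (Cg g)" "bdd_above c" and y: "y \<in> c"
  shows "y < Sup c" "g (Sup c) = g y" "Sup c \<notin> Cg g" "lflat g (Sup c)"
proof -
  note cb = comp_basic[OF c(1)]
  have ne: "c \<noteq> {}" using y by auto
  have "Sup c \<notin> c"
  proof
    assume "Sup c \<in> c"
    then obtain e where "e > 0" "ball (Sup c) e \<subseteq> c" using cb(1) openE by blast
    then have "Sup c + e/2 \<in> c" by (auto simp: dist_real_def)
    then show False using cSup_upper[OF _ c(2), of "Sup c + e/2"] \<open>e>0\<close> by simp
  qed
  then show ylt: "y < Sup c" using cSup_upper[OF y c(2)] y by (cases "y = Sup c") auto
  have sub: "{y..<Sup c} \<subseteq> c"
  proof
    fix z assume z: "z \<in> {y..<Sup c}"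
    then have "z < Sup c" by simp
    from less_cSupD[OF ne this] obtain w where w: "w \<in> c" "z < w" by blast
    have ci: "\<forall>a\<in>c. \<forall>b\<in>c. \<forall>z. a \<le> z \<longrightarrow> z \<le> b \<longrightarrow> z \<in> c" using cb(2) connected_iff_interval by blast
    have "y \<le> z" "z \<le> w" using z w by simp_all
    then show "z \<in> c" using ci y w(1) by blast
  qed
  have const: "\<forall>z\<in>{y..<Sup c}. g z = g y"
  proof
    fix z assume "z \<in> {y..<Sup c}"
    then have "{y..z} \<subseteq> {y..<Sup c}" by auto
    then have "{y..z} \<subseteq> Cg g" using sub cb(3) by blast
    then show "g z = g y" using Cg_const \<open>z \<in> {y..<Sup c}\<close> by (metis atLeastLessThan_iff)
  qed
  have "{y<..<Sup c} \<subseteq> {y..<Sup c}" by auto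
  then have const': "\<forall>z\<in>{y<..<Sup c}. g z = g y"
    using ball_sub[OF const] by blast
  have "eventually (\<lambda>s. g s = g y) (at_left (Sup c))"
    using ev_left_iv[OF ylt const'] .
  then have "(g \<longlongrightarrow> g y) (at_left (Sup c))" by (simp add: tendsto_eventually)
  then show gS: "g (Sup c) = g y"
    using tendsto_unique[OF trivial_limit_at_left_real lcont] by blast
  show "Sup c \<notin> Cg g"
  proof
    assume "Sup c \<in> Cg g"
    then have "{y..Sup c} \<subseteq> Cg g" using sub cb(3) by (auto simp: less_le)
    then have "{y..Sup c} \<subseteq> connected_component_set (Cg g) y"
      using ylt by (intro connected_component_maximal) auto
    moreover have "Sup c \<in> {y..Sup c}" using ylt by simp
    ultimately have "Sup c \<in> connected_component_set (Cg g) y" by blast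
    then show False using cb(4)[OF y] \<open>Sup c \<notin> c\<close> by simp
  qed
  have "\<forall>z\<in>{Sup c - (Sup c - y)<..<Sup c}. g z = g (Sup c)"
  proof
    fix z assume "z \<in> {Sup c - (Sup c - y)<..<Sup c}"
    then have "z \<in> {y<..<Sup c}" by simp
    then have "g z = g y" using const' by blast
    then show "g z = g (Sup c)" using gS by simp
  qed
  moreover have "Sup c - y > 0" using ylt by simp
  ultimately show "lflat g (Sup c)" unfolding lflat_def by blast
qed

lemma comp_inf:
  assumes c: "c \<in> components (Cg g)" "bdd_below c" and y: "y \<in> c" and nd: "Inf c \<notin> Dg g"
  shows "rflat g (Inf c)"
proof -
  note cb = comp_basic[OF c(1)]
  have ne: "c \<noteq> {}" using y by auto
  have "Inf c \<notin> c"
  proof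
    assume "Inf c \<in> c"
    then obtain e where "e > 0" "ball (Inf c) e \<subseteq> c" using cb(1) openE by blast
    then have "Inf c - e/2 \<in> c" by (auto simp: dist_real_def)
    then show False using cInf_lower[OF _ c(2), of "Inf c - e/2"] \<open>e>0\<close> by simp
  qed
  then have ylt: "Inf c < y" using cInf_lower[OF y c(2)] y by (cases "y = Inf c") auto
  have sub: "{Inf c<..y} \<subseteq> c"
  proof
    fix z assume z: "z \<in> {Inf c<..y}"
    then have "Inf c < z" by simp
    from cInf_lessD[OF ne this] obtain w where w: "w \<in> c" "w < z" by blast
    have ci: "\<forall>a\<in>c. \<forall>b\<in>c. \<forall>z. a \<le> z \<longrightarrow> z \<le> b \<longrightarrow> z \<in> c" using cb(2) connected_iff_interval by blast
    have "w \<le> z" "z \<le> y" using z w by simp_all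
    then show "z \<in> c" using ci y w(1) by blast
  qed
  have const: "\<forall>z\<in>{Inf c<..y}. g z = g y"
  proof
    fix z assume "z \<in> {Inf c<..y}"
    then have "{z..y} \<subseteq> {Inf c<..y}" by auto
    then have "{z..y} \<subseteq> Cg g" using sub cb(3) by blast
    then show "g z = g y" using Cg_const \<open>z \<in> {Inf c<..y}\<close> by (metis greaterThanAtMost_iff)
  qed
  have "{Inf c<..<y} \<subseteq> {Inf c<..y}" by auto
  then have const': "\<forall>z\<in>{Inf c<..<y}. g z = g y"
    using ball_sub[OF const] by blast
  have "eventually (\<lambda>s. g s = g y) (at_right (Inf c))"
    using ev_right_iv[OF ylt const'] .
  then have "(g \<longlongrightarrow> g y) (at_right (Inf c))" by (simp add: tendsto_eventually)
  then have "g (Inf c) + jump g (Inf c) = g y"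
    using tendsto_unique[OF trivial_limit_at_right_real jump_tendsto] by blast
  then have gI: "g (Inf c) = g y" using notDg_jump[OF nd] by simp
  have "\<forall>z\<in>{Inf c<..<Inf c + (y - Inf c)}. g z = g (Inf c)"
  proof
    fix z assume "z \<in> {Inf c<..<Inf c + (y - Inf c)}"
    then have "z \<in> {Inf c<..<y}" by simp
    then have "g z = g y" using const' by blast
    then show "g z = g (Inf c)" using gI by simp
  qed
  moreover have "y - Inf c > 0" using ylt by simp
  ultimately show "rflat g (Inf c)" unfolding rflat_def by blast
qed

lemma Nplus_D: "x \<in> Nplus g \<Longrightarrow> x \<notin> Dg g \<and> x \<notin> Cg g \<and> lflat g x"
proof -
  assume "x \<in> Nplus g"
  then obtain c where c: "c \<in> components (Cg g)" "bdd_above c" "x = Sup c" "x \<notin> Dg g"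
    unfolding Nplus_def by blast
  obtain y where "y \<in> c" using in_components_nonempty[OF c(1)] by blast
  then show ?thesis using comp_sup[OF c(1,2)] c by blast
qed

lemma Nminus_D: "x \<in> Nminus g \<Longrightarrow> x \<notin> Dg g \<and> rflat g x"
proof -
  assume "x \<in> Nminus g"
  then obtain c where c: "c \<in> components (Cg g)" "bdd_below c" "x = Inf c" "x \<notin> Dg g"
    unfolding Nminus_def by blast
  obtain y where "y \<in> c" using in_components_nonempty[OF c(1)] by blast
  then show ?thesis using comp_inf[OF c(1,2)] c by blast
qed

lemma lflat_Cg: assumes e: "\<forall>s\<in>{x-e<..<x}. g s = g x" and s: "s \<in> {x-e<..<x}" shows "s \<in> Cg g"
proof -
  have d0: "0 < s-(x-e)" "0 < x-s" using s unfolding greaterThanLessThan_iff by linarith+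
  obtain d where d: "d > 0" and d1: "d < s-(x-e)" "d < x-s" using field_lbound_gt_zero[OF d0] by blast
  have "{s-d<..<s+d} \<subseteq> {x-e<..<x}"
  proof
    fix u assume "u \<in> {s-d<..<s+d}"
    then show "u \<in> {x-e<..<x}" using d1 unfolding greaterThanLessThan_iff by linarith
  qed
  then have sub: "{s-d<..<s+d} \<subseteq> {x-e<..<x}" .
  have gs: "g s = g x" using e s by blast
  have "\<forall>u\<in>{s-d<..<s+d}. g u = g s"
  proof
    fix u assume "u \<in> {s-d<..<s+d}"
    then have "u \<in> {x-e<..<x}" using sub by blast
    then have "g u = g x" using e by blast
    then show "g u = g s" using gs by simp
  qed
  then show ?thesis unfolding Cg_def using d by blast
qed

lemma rflat_Cg: assumes e: "\<forall>s\<in>{x<..<x+e}. g s = g x" and s: "s \<in> {x<..<x+e}" shows "s \<in> Cg g"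
proof -
  have d0: "0 < s-x" "0 < x+e-s" using s unfolding greaterThanLessThan_iff by linarith+
  obtain d where d: "d > 0" and d1: "d < s-x" "d < x+e-s" using field_lbound_gt_zero[OF d0] by blast
  have "{s-d<..<s+d} \<subseteq> {x<..<x+e}"
  proof
    fix u assume "u \<in> {s-d<..<s+d}"
    then show "u \<in> {x<..<x+e}" using d1 unfolding greaterThanLessThan_iff by linarith
  qed
  then have sub: "{s-d<..<s+d} \<subseteq> {x<..<x+e}" .
  have gs: "g s = g x" using e s by blast
  have "\<forall>u\<in>{s-d<..<s+d}. g u = g s"
  proof
    fix u assume "u \<in> {s-d<..<s+d}"
    then have "u \<in> {x<..<x+e}" using sub by blast
    then have "g u = g x" using e by blast
    then show "g u = g s" using gs by simp
  qed
  then show ?thesis unfolding Cg_def using d by blast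
qed

lemma Nplus_I: assumes "x \<notin> Dg g" "x \<notin> Cg g" "lflat g x" shows "x \<in> Nplus g"
proof -
  obtain e where e: "e > 0" "\<forall>s\<in>{x-e<..<x}. g s = g x" using assms(3) lflat_def by blast
  define y where "y = x - e/2"
  have y: "y \<in> {x-e<..<x}" using e by (simp add: y_def)
  have sub: "{x-e<..<x} \<subseteq> Cg g" using lflat_Cg[OF e(2)] by auto
  define c where "c = connected_component_set (Cg g) y"
  have cc: "c \<in> components (Cg g)" using sub y components_iff c_def by blast
  have ic: "{x-e<..<x} \<subseteq> c" unfolding c_def using y sub by (intro connected_component_maximal) auto
  have cub: "\<forall>z\<in>c. z < x"
  proof (rule ccontr)
    assume "\<not> (\<forall>z\<in>c. z < x)"
    then obtain z where z: "z \<in> c" "z \<ge> x" by auto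
    have ci: "\<forall>a\<in>c. \<forall>b\<in>c. \<forall>z. a \<le> z \<longrightarrow> z \<le> b \<longrightarrow> z \<in> c" using comp_basic(2)[OF cc] connected_iff_interval by blast
    have "y \<in> c" "y \<le> x" using ic y by auto
    then have "x \<in> c" using ci z by blast
    then show False using comp_basic(3)[OF cc] assms(2) by auto
  qed
  have bdd: "bdd_above c" using cub by (meson bdd_aboveI less_imp_le)
  have ne: "c \<noteq> {}" using ic y by auto
  have "Sup c \<le> x" using cub by (intro cSup_least[OF ne]) (simp add: less_imp_le)
  moreover have "\<not> Sup c < x"
  proof
    assume "Sup c < x"
    define z where "z = (max (Sup c) y + x) / 2"
    have "z \<in> {x-e<..<x}" using y \<open>Sup c < x\<close> by (auto simp: z_def)
    then have "z \<in> c" using ic by auto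
    then show False using cSup_upper[OF _ bdd, of z] \<open>Sup c < x\<close> by (auto simp: z_def)
  qed
  ultimately have "x = Sup c" by simp
  then show ?thesis unfolding Nplus_def using cc bdd assms(1) by blast
qed

lemma Nminus_I: assumes "x \<notin> Dg g" "x \<notin> Cg g" "rflat g x" shows "x \<in> Nminus g"
proof -
  obtain e where e: "e > 0" "\<forall>s\<in>{x<..<x+e}. g s = g x" using assms(3) rflat_def by blast
  define y where "y = x + e/2"
  have y: "y \<in> {x<..<x+e}" using e by (simp add: y_def)
  have sub: "{x<..<x+e} \<subseteq> Cg g" using rflat_Cg[OF e(2)] by auto
  define c where "c = connected_component_set (Cg g) y"
  have cc: "c \<in> components (Cg g)" using sub y components_iff c_def by blast
  have ic: "{x<..<x+e} \<subseteq> c" unfolding c_def using y sub by (intro connected_component_maximal) auto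
  have cub: "\<forall>z\<in>c. z > x"
  proof (rule ccontr)
    assume "\<not> (\<forall>z\<in>c. z > x)"
    then obtain z where z: "z \<in> c" "z \<le> x" by auto
    have ci: "\<forall>a\<in>c. \<forall>b\<in>c. \<forall>z. a \<le> z \<longrightarrow> z \<le> b \<longrightarrow> z \<in> c" using comp_basic(2)[OF cc] connected_iff_interval by blast
    have "y \<in> c" "x \<le> y" using ic y by auto
    then have "x \<in> c" using ci z by blast
    then show False using comp_basic(3)[OF cc] assms(2) by auto
  qed
  have bdd: "bdd_below c" using cub by (meson bdd_belowI less_imp_le)
  have ne: "c \<noteq> {}" using ic y by auto
  have "Inf c \<ge> x" using cub by (intro cInf_greatest[OF ne]) (simp add: less_imp_le)
  moreover have "\<not> Inf c > x"
  proof
    assume "Inf c > x"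
    define z where "z = (min (Inf c) y + x) / 2"
    have "z \<in> {x<..<x+e}" using y \<open>Inf c > x\<close> by (auto simp: z_def)
    then have "z \<in> c" using ic by auto
    then show False using cInf_lower[OF _ bdd, of z] \<open>Inf c > x\<close> by (auto simp: z_def)
  qed
  ultimately have "x = Inf c" by simp
  then show ?thesis unfolding Nminus_def using cc bdd assms(1) by blast
qed

lemma tstar_Cg:
  assumes "t \<in> Cg g" "t \<le> b" "b \<notin> Cg g"
  shows "t < tstar g t" "tstar g t \<le> b" "g (tstar g t) = g t" "tstar g t \<notin> Cg g"
    "tstar g t \<notin> Dg g \<Longrightarrow> tstar g t \<in> Nplus g"
proof -
  define c where "c = connected_component_set (Cg g) t"
  have cc: "c \<in> components (Cg g)" using assms(1) components_iff c_def by blast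
  have tc: "t \<in> c" using assms(1) by (simp add: c_def)
  have cub: "\<forall>z\<in>c. z < b"
  proof (rule ccontr)
    assume "\<not> (\<forall>z\<in>c. z < b)"
    then obtain z where z: "z \<in> c" "z \<ge> b" by auto
    have ci: "\<forall>a\<in>c. \<forall>b\<in>c. \<forall>z. a \<le> z \<longrightarrow> z \<le> b \<longrightarrow> z \<in> c" using comp_basic(2)[OF cc] connected_iff_interval by blast
    then have "b \<in> c" using z tc assms(2) by blast
    then show False using comp_basic(3)[OF cc] assms(3) by auto
  qed
  have bdd: "bdd_above c" using cub by (meson bdd_aboveI less_imp_le)
  have ts: "tstar g t = Sup c" using assms(1) by (simp add: tstar_def c_def)
  show "t < tstar g t" "g (tstar g t) = g t" "tstar g t \<notin> Cg g" using comp_sup[OF cc bdd tc] ts by auto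
  show "tstar g t \<le> b" unfolding ts using cub tc by (intro cSup_least) (auto simp: less_imp_le)
  show "tstar g t \<notin> Dg g \<Longrightarrow> tstar g t \<in> Nplus g" unfolding Nplus_def ts using cc bdd by blast
qed

end

lemma lim_split:
  fixes q :: "real \<Rightarrow> 'a::real_normed_vector"
  assumes z: "\<And>s. s \<in> X \<Longrightarrow> s \<notin> A \<Longrightarrow> q s = 0" and lp: "x islimpt (X - A)"
  shows "(at x within X \<noteq> bot \<and> (q \<longlongrightarrow> L) (at x within X)) \<longleftrightarrow> (L = 0 \<and> (q \<longlongrightarrow> 0) (at x within X \<inter> A))"
proof -
  have nb: "at x within (X - A) \<noteq> bot" using lp trivial_limit_within by blast
  have nbX: "at x within X \<noteq> bot" using lp islimpt_subset[of x "X - A" X] trivial_limit_within by blast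
  have q0: "(q \<longlongrightarrow> 0) (at x within (X - A))"
    by (rule tendsto_eventually) (simp add: eventually_at_filter z)
  show ?thesis
  proof
    assume H: "at x within X \<noteq> bot \<and> (q \<longlongrightarrow> L) (at x within X)"
    then have "(q \<longlongrightarrow> L) (at x within (X - A))" using tendsto_within_subset by blast
    then have L0: "L = 0" using tendsto_unique[OF nb _ q0] by blast
    moreover have "(q \<longlongrightarrow> 0) (at x within X \<inter> A)" using H L0 tendsto_within_subset by blast
    ultimately show "L = 0 \<and> (q \<longlongrightarrow> 0) (at x within X \<inter> A)" by blast
  next
    assume H: "L = 0 \<and> (q \<longlongrightarrow> 0) (at x within X \<inter> A)"
    have "X = (X \<inter> A) \<union> (X - A)" by blast
    then have "(q \<longlongrightarrow> 0) (at x within X)" using H q0 Lim_within_Un by metis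
    then show "at x within X \<noteq> bot \<and> (q \<longlongrightarrow> L) (at x within X)" using H nbX by simp
  qed
qed

lemma not_limpt_tendsto: "\<not> x islimpt X \<Longrightarrow> (f \<longlongrightarrow> l) (at x within X)"
proof -
  assume "\<not> x islimpt X"
  then have "at x within X = bot" using trivial_limit_within[of x X] unfolding trivial_limit_def by blast
  then show ?thesis by simp
qed


theorem proposition3p4:
  fixes g :: "real \<Rightarrow> real" and a b t :: real and f :: "real \<Rightarrow> 'a::real_normed_field"
  assumes mono_g: "mono g"
    and left_cont: "\<And>x. continuous (at_left x) g"
    and ab: "a < b"
    and a_N: "a \<notin> Nminus g"
    and b_N: "b \<notin> Dg g \<union> Cg g \<union> Nplus g"
    and t: "t \<in> {a..b}"
  defines "h \<equiv> (\<lambda>s. f s * of_real (jump g s))"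
    and "D1 \<equiv> {x \<in> {a..b} \<inter> Nminus g. x islimpt (Dg g \<inter> {a..<x})}"
    and "D2 \<equiv> {x \<in> {a..b} \<inter> Nplus g. x islimpt (Dg g \<inter> {x<..b})}"
    and "D3 \<equiv> {x \<in> {a..b} - (Ng g \<union> Dg g). x islimpt (Dg g \<inter> {a..b})}"
  shows
    "(tstar g t \<in> D1 \<union> D2 \<union> D3 \<longrightarrow>
        (g_differentiable g a b h t \<longleftrightarrow>
          ((\<lambda>s. f s * of_real (jump g s) / of_real (g s - g t)) \<longlongrightarrow> 0)
            (at (tstar g t) within
               ({a..b} \<inter> Dg g \<inter> {s. g s \<noteq> g t} \<inter>
                (if tstar g t \<in> Nminus g then {..<tstar g t}
                 else if tstar g t \<in> Nplus g then {tstar g t<..} else UNIV)))))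
     \<and> (tstar g t \<in> Dg g \<inter> {x. x islimpt (Dg g \<inter> {t<..b})} \<longrightarrow>
        (g_differentiable g a b h t \<longleftrightarrow>
          ((\<lambda>s. f s * of_real (jump g s)) \<longlongrightarrow> 0)
            (at (tstar g t) within ({a..b} \<inter> Dg g \<inter> {tstar g t<..}))))
     \<and> (tstar g t \<notin> D1 \<union> D2 \<union> D3 \<and>
        tstar g t \<notin> Dg g \<inter> {x. x islimpt (Dg g \<inter> {t<..b})} \<longrightarrow>
        g_differentiable g a b h t)
     \<and> (g_differentiable g a b h t \<longrightarrow>
        g_deriv g a b h t = - (f (tstar g t) * of_real (indicator (Dg g) (tstar g t))))"
proof -
  interpret gctx g using mono_g left_cont by unfold_locales
  define T where "T = tstar g t"
  define S' where "S' = {a..b} \<inter> Dg g \<inter> {s. g s \<noteq> g t} \<inter>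
                (if T \<in> Nminus g then {..<T} else if T \<in> Nplus g then {T<..} else UNIV)"
  define q where "q = (\<lambda>s. f s * of_real (jump g s) / of_real (g s - g t))"
  define Lim1 where "Lim1 = (q \<longlongrightarrow> 0) (at T within S')"
  define Lim2 where "Lim2 = ((\<lambda>s. f s * of_real (jump g s)) \<longlongrightarrow> 0) (at T within ({a..b} \<inter> Dg g \<inter> {T<..}))"
  define C1 where "C1 = (T \<in> D1 \<union> D2 \<union> D3)"
  define C2 where "C2 = (T \<in> Dg g \<inter> {x. x islimpt (Dg g \<inter> {t<..b})})"
  define L0 where "L0 = - (f T * of_real (indicator (Dg g) T))"
  have ta: "a \<le> t" and tb: "t \<le> b" using t by auto
  have bC: "b \<notin> Cg g" and bD: "b \<notin> Dg g" and bP: "b \<notin> Nplus g" using b_N by auto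
  have Tab: "a \<le> T \<and> T \<le> b \<and> t \<le> T"
  proof (cases "t \<in> Cg g")
    case True then show ?thesis using tstar_Cg[OF True tb bC] ta unfolding T_def by auto
  next
    case False then show ?thesis using ta tb by (simp add: T_def tstar_def)
  qed
  have hz: "\<And>s. s \<notin> Dg g \<Longrightarrow> h s = 0" by (simp add: h_def notDg_jump)
  have main: "(\<forall>L. has_g_deriv g a b h t L \<longleftrightarrow> (L = L0 \<and> (if T \<in> Dg g then Lim2 else Lim1)))
     \<and> (T \<in> Dg g \<longrightarrow> \<not> C1) \<and> (T \<notin> Dg g \<longrightarrow> \<not> C2)
     \<and> (\<not> C1 \<and> \<not> C2 \<longrightarrow> (if T \<in> Dg g then Lim2 else Lim1))"
  proof (cases "T \<in> Dg g")
    case True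
    have tDC: "t \<in> Dg g \<union> Cg g" using True by (cases "t \<in> Cg g") (auto simp: T_def tstar_def)
    have Tb: "T < b" using Tab True bD by (cases "T = b") auto
    define J where "J = jump g T"
    have J: "J > 0" using True by (simp add: Dg_def J_def)
    define S where "S = {a..b} \<inter> {s. g s \<noteq> g T} \<inter> {T<..}"
    define Q where "Q = (\<lambda>s. (h s - h T) / of_real (g s - g T))"
    have hg: "\<And>L. has_g_deriv g a b h t L \<longleftrightarrow> (at T within S \<noteq> bot \<and> (Q \<longlongrightarrow> L) (at T within S))"
      using tDC by (simp add: has_g_deriv_def Let_def S_def Q_def T_def)
    have gtT: "\<And>s. s > T \<Longrightarrow> g s - g T \<ge> J" using jump_le J_def by fastforce
    have S_eq: "S = {T<..b}"
    proof
      show "S \<subseteq> {T<..b}" unfolding S_def by auto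
      show "{T<..b} \<subseteq> S"
      proof
        fix s assume s: "s \<in> {T<..b}"
        then have "g s - g T \<ge> J" using gtT by auto
        then have "g s \<noteq> g T" using J by auto
        then show "s \<in> S" using s Tab unfolding S_def by auto
      qed
    qed
    have gl: "((\<lambda>s. g s - g T) \<longlongrightarrow> J) (at T within S)"
    proof -
      have "(g \<longlongrightarrow> g T + J) (at T within S)"
        using tendsto_within_subset[OF jump_tendsto[of T]] unfolding J_def S_def by auto
      then show ?thesis using tendsto_diff[OF _ tendsto_const[of "g T"]] by fastforce
    qed
    have "{T<..<b} \<subseteq> S" unfolding S_eq by auto
    then have lp: "T islimpt (S - Dg g)" using limpt_right[OF Tb] by blast
    have split: "\<And>M. (at T within S \<noteq> bot \<and> (h \<longlongrightarrow> M) (at T within S)) \<longleftrightarrow> (M = 0 \<and> (h \<longlongrightarrow> 0) (at T within S \<inter> Dg g))"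
      by (rule lim_split) (use hz lp in auto)
    have SD: "S \<inter> Dg g = {a..b} \<inter> Dg g \<inter> {T<..}" using S_eq Tab by auto
    have L2: "Lim2 \<longleftrightarrow> (h \<longlongrightarrow> 0) (at T within S \<inter> Dg g)" unfolding Lim2_def SD h_def ..
    have hT: "h T = f T * of_real J" by (simp add: h_def J_def)
    have L0: "L0 = - f T" using True by (simp add: L0_def)
    have ofJ: "(of_real J :: 'a) \<noteq> 0" using J by simp
    have key: "\<And>L. has_g_deriv g a b h t L \<longleftrightarrow> (L = L0 \<and> Lim2)"
    proof
      fix L assume "has_g_deriv g a b h t L"
      then have nb: "at T within S \<noteq> bot" and QL: "(Q \<longlongrightarrow> L) (at T within S)" using hg by auto
      have ev: "eventually (\<lambda>s. h T + Q s * of_real (g s - g T) = h s) (at T within S)"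
        unfolding eventually_at_filter
        by (rule always_eventually) (auto simp: S_def Q_def)
      have "((\<lambda>s. h T + Q s * of_real (g s - g T)) \<longlongrightarrow> h T + L * of_real J) (at T within S)"
        by (intro tendsto_intros QL gl)
      then have "(h \<longlongrightarrow> h T + L * of_real J) (at T within S)" using tendsto_cong[OF ev] by blast
      then have "h T + L * of_real J = 0 \<and> Lim2" using split nb L2 by blast
      then have e0: "(f T + L) * of_real J = 0" and l2: Lim2 unfolding hT by (simp_all add: distrib_right)
      then have "f T + L = 0" using ofJ by simp
      then have "L = - f T" by (simp add: eq_neg_iff_add_eq_0 add.commute)
      then show "L = L0 \<and> Lim2" using l2 L0 by simp
    next
      fix L assume H: "L = L0 \<and> Lim2"
      then have h0: "at T within S \<noteq> bot \<and> (h \<longlongrightarrow> 0) (at T within S)" using split L2 by blast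
      have "(Q \<longlongrightarrow> (0 - h T) / of_real J) (at T within S)"
        unfolding Q_def using h0 ofJ by (intro tendsto_intros gl) auto
      moreover have "(0 - h T) / of_real J = L" using H ofJ unfolding hT L0 by simp
      ultimately show "has_g_deriv g a b h t L" using hg h0 by simp
    qed
    have "T \<notin> Nminus g" "T \<notin> Nplus g" using True Nplus_D Nminus_D by blast+
    then have nC1: "\<not> C1" using True unfolding C1_def D1_def D2_def D3_def by blast
    have "\<not> C2 \<Longrightarrow> Lim2"
    proof -
      assume "\<not> C2"
      then have "\<not> T islimpt (Dg g \<inter> {t<..b})" using True unfolding C2_def by auto
      moreover have "{a..b} \<inter> Dg g \<inter> {T<..} \<subseteq> Dg g \<inter> {t<..b}" using Tab by auto
      ultimately show Lim2 unfolding Lim2_def using islimpt_subset not_limpt_tendsto by metis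
    qed
    then show ?thesis using key nC1 True by simp

  next
    case TnD: False
    let ?G = ?thesis
    have hT: "h T = 0" using hz TnD by blast
    have L0: "L0 = 0" using TnD by (simp add: L0_def)
    have qz: "\<And>s. s \<notin> Dg g \<Longrightarrow> q s = 0" by (simp add: q_def notDg_jump)
    have nC2: "\<not> C2" using TnD by (simp add: C2_def)
    have gen: "\<And>S. (\<And>L. has_g_deriv g a b h t L \<longleftrightarrow> (at T within S \<noteq> bot \<and> (q \<longlongrightarrow> L) (at T within S)))
        \<Longrightarrow> S \<inter> Dg g = S' \<Longrightarrow> T islimpt (S - Dg g) \<Longrightarrow> (\<not> C1 \<longrightarrow> \<not> T islimpt S') \<Longrightarrow> ?G"
    proof -
      fix S assume hg: "\<And>L. has_g_deriv g a b h t L \<longleftrightarrow> (at T within S \<noteq> bot \<and> (q \<longlongrightarrow> L) (at T within S))"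
        and SD: "S \<inter> Dg g = S'" and lp: "T islimpt (S - Dg g)" and nl: "\<not> C1 \<longrightarrow> \<not> T islimpt S'"
      have split: "\<And>L. (at T within S \<noteq> bot \<and> (q \<longlongrightarrow> L) (at T within S)) \<longleftrightarrow> (L = 0 \<and> (q \<longlongrightarrow> 0) (at T within S \<inter> Dg g))"
        by (rule lim_split) (use qz lp in auto)
      have key: "\<And>L. has_g_deriv g a b h t L \<longleftrightarrow> (L = L0 \<and> Lim1)"
        unfolding hg split SD Lim1_def L0 ..
      have "\<not> C1 \<Longrightarrow> Lim1" using nl not_limpt_tendsto unfolding Lim1_def by blast
      then show ?G using key nC2 TnD by simp
    qed
    show ?thesis
    proof (cases "t \<in> Cg g")
      case tC: True
      note ts = tstar_Cg[OF tC tb bC]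
      have TP: "T \<in> Nplus g" using ts(5) TnD by (simp add: T_def)
      have gT: "g T = g t" using ts(3) by (simp add: T_def)
      from Nplus_D[OF TP] have TnC: "T \<notin> Cg g" and lfT: "lflat g T" by auto
      have nrT: "\<not> rflat g T" using TnC lfT Cg_iff by blast
      have TnM: "T \<notin> Nminus g" using Nminus_D nrT by blast
      have Tb: "T < b" using Tab TP bP by (cases "T = b") auto
      define S where "S = {a..b} \<inter> {s. g s \<noteq> g T} \<inter> {T<..}"
      define Q where "Q = (\<lambda>s. (h s - h T) / of_real (g s - g T))"
      have tDC: "t \<in> Dg g \<union> Cg g" using tC by simp
      have Qq: "Q = q" by (rule ext) (simp add: Q_def gT q_def h_def notDg_jump[OF TnD])
      have hg0: "\<And>L. has_g_deriv g a b h t L \<longleftrightarrow> (at T within S \<noteq> bot \<and> (Q \<longlongrightarrow> L) (at T within S))"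
        using tDC by (simp add: has_g_deriv_def Let_def S_def Q_def T_def)
      have hg: "\<And>L. has_g_deriv g a b h t L \<longleftrightarrow> (at T within S \<noteq> bot \<and> (q \<longlongrightarrow> L) (at T within S))"
        using hg0 unfolding Qq .
      have SD: "S \<inter> Dg g = S'" unfolding S_def S'_def using TnM TP gT by auto
      have gne: "\<And>s. s > T \<Longrightarrow> g s \<noteq> g T" using not_rflat[OF nrT] by blast
      have "{T<..<b} \<subseteq> S" unfolding S_def using Tab gne by auto
      then have lp: "T islimpt (S - Dg g)" using limpt_right[OF Tb] by blast
      have nl: "\<not> C1 \<longrightarrow> \<not> T islimpt S'"
      proof
        assume "\<not> C1"
        then have "T \<notin> D2" unfolding C1_def by blast
        then have "\<not> T islimpt (Dg g \<inter> {T<..b})" using TP Tab unfolding D2_def by auto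
        moreover have "S' \<subseteq> Dg g \<inter> {T<..b}" unfolding S'_def using TnM TP by auto
        ultimately show "\<not> T islimpt S'" using islimpt_subset by blast
      qed
      show ?thesis by (rule gen[OF hg SD lp nl])
    next
      case tnC: False
      have tnD: "t \<notin> Dg g" and Tt: "T = t" using TnD tnC by (auto simp: T_def tstar_def)
      define S where "S = {a..b} \<inter> {s. g s \<noteq> g t} \<inter> (if t \<in> Nplus g \<union> {a} then {t..} else UNIV)
                   \<inter> (if t \<in> Nminus g \<union> {b} then {..t} else UNIV)"
      define Q where "Q = (\<lambda>s. (h s - h t) / of_real (g s - g t))"
      have Qq: "Q = q" by (rule ext) (simp add: Q_def q_def h_def notDg_jump[OF tnD])
      have hg0: "\<And>L. has_g_deriv g a b h t L \<longleftrightarrow> (at t within S \<noteq> bot \<and> (Q \<longlongrightarrow> L) (at t within S))"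
        using tnD tnC unfolding Q_def S_def by (simp add: has_g_deriv_def Let_def)
      have hg: "\<And>L. has_g_deriv g a b h t L \<longleftrightarrow> (at T within S \<noteq> bot \<and> (q \<longlongrightarrow> L) (at T within S))"
        using hg0 unfolding Qq Tt .
      consider (P) "t \<in> Nplus g" | (M) "t \<notin> Nplus g" "t \<in> Nminus g" | (N) "t \<notin> Nplus g" "t \<notin> Nminus g" by blast
      then show ?thesis
      proof cases
        case P
        from Nplus_D[OF P] have lft: "lflat g t" by auto
        have nrt: "\<not> rflat g t" using tnC lft Cg_iff by blast
        have tnM: "t \<notin> Nminus g" using Nminus_D nrt by blast
        have tb': "t < b" using tb P bP by (cases "t = b") auto
        have SD: "S \<inter> Dg g = S'" unfolding S_def S'_def Tt using tnM P tnD tb' by (auto simp: le_less)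
        have gne: "\<And>s. s > t \<Longrightarrow> g s \<noteq> g t" using not_rflat[OF nrt] by blast
        have "{t<..<b} \<subseteq> S" unfolding S_def using ta gne tnM tb' by auto
        then have lp: "T islimpt (S - Dg g)" using limpt_right[OF tb'] Tt by blast
        have nl: "\<not> C1 \<longrightarrow> \<not> T islimpt S'"
        proof
          assume "\<not> C1"
          then have "t \<notin> D2" unfolding C1_def Tt by blast
          then have "\<not> t islimpt (Dg g \<inter> {t<..b})" using P ta tb unfolding D2_def by auto
          moreover have "S' \<subseteq> Dg g \<inter> {t<..b}" unfolding S'_def Tt using tnM P by auto
          ultimately show "\<not> T islimpt S'" using islimpt_subset Tt by blast
        qed
        show ?thesis by (rule gen[OF hg SD lp nl])
      next
        case M
        from Nminus_D[OF M(2)] have rft: "rflat g t" by auto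
        have nlt: "\<not> lflat g t" using tnC rft Cg_iff by blast
        have at': "a < t" using ta M a_N by (cases "t = a") auto
        have SD: "S \<inter> Dg g = S'" unfolding S_def S'_def Tt using M tnD at' by (auto simp: le_less)
        have gne: "\<And>s. s < t \<Longrightarrow> g s \<noteq> g t" using not_lflat[OF nlt] by blast
        have "{a<..<t} \<subseteq> S" unfolding S_def using tb gne M at' by auto
        then have lp: "T islimpt (S - Dg g)" using limpt_left[OF at'] Tt by blast
        have nl: "\<not> C1 \<longrightarrow> \<not> T islimpt S'"
        proof
          assume "\<not> C1"
          then have "t \<notin> D1" unfolding C1_def Tt by blast
          then have "\<not> t islimpt (Dg g \<inter> {a..<t})" using M ta tb unfolding D1_def by auto
          moreover have "S' \<subseteq> Dg g \<inter> {a..<t}" unfolding S'_def Tt using M by auto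
          ultimately show "\<not> T islimpt S'" using islimpt_subset Tt by blast
        qed
        show ?thesis by (rule gen[OF hg SD lp nl])
      next
        case N
        have nlt: "\<not> lflat g t" using Nplus_I[OF tnD tnC] N by blast
        have nrt: "\<not> rflat g t" using Nminus_I[OF tnD tnC] N by blast
        have gne: "\<And>s. s \<noteq> t \<Longrightarrow> g s \<noteq> g t"
        proof -
          fix s assume "s \<noteq> t"
          then show "g s \<noteq> g t" using not_lflat[OF nlt] not_rflat[OF nrt] by (cases "s < t") auto
        qed
        have SD: "S \<inter> Dg g = S'" unfolding S_def S'_def Tt using N by auto
        have lp: "T islimpt (S - Dg g)"
        proof (cases "t < b")
          case True
          have "{t<..<b} \<subseteq> S" unfolding S_def using ta gne N True by auto
          then show ?thesis using limpt_right[OF True] Tt by blast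
        next
          case False
          then have tb2: "t = b" using tb by simp
          then have at': "a < t" using ab by simp
          have "{a<..<t} \<subseteq> S" unfolding S_def using tb gne N at' by auto
          then show ?thesis using limpt_left[OF at'] Tt by blast
        qed
        have nl: "\<not> C1 \<longrightarrow> \<not> T islimpt S'"
        proof
          assume "\<not> C1"
          then have "t \<notin> D3" unfolding C1_def Tt by blast
          then have "\<not> t islimpt (Dg g \<inter> {a..b})" using N ta tb tnD unfolding D3_def Ng_def by auto
          moreover have "S' \<subseteq> Dg g \<inter> {a..b}" unfolding S'_def by auto
          ultimately show "\<not> T islimpt S'" using islimpt_subset Tt by blast
        qed
        show ?thesis by (rule gen[OF hg SD lp nl])
      qed
    qed
  qed
  have dd: "g_differentiable g a b h t \<longleftrightarrow> (if T \<in> Dg g then Lim2 else Lim1)"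
    using main unfolding g_differentiable_def by auto
  have gd: "g_differentiable g a b h t \<Longrightarrow> g_deriv g a b h t = L0"
    using main unfolding g_differentiable_def g_deriv_def by (auto intro!: the_equality)
  show ?thesis
    unfolding T_def[symmetric] C1_def[symmetric] L0_def[symmetric]
    using dd gd main unfolding Lim1_def Lim2_def S'_def q_def C2_def by auto
qed

end
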